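(* Let $1\le p<\infty$, $E=\mathcal{L}^p(I)$, and assume $\Lambda<1/2$. If $(b_m)$ is a Schauder basis of $E$, then $(b_m-0*_Tb_m)$ is a Schauder basis of $E$. Furthermore, if the $\alpha_n$ are constant functions and $(b_m)$ is a bounded Schauder basis of $E$, then $(b_m-0*_Tb_m)$ is also bounded.
   Context: Let $N\ge 2$, $I=[x_0,x_N]$, $\Delta: x_0<\dots<x_N$ a partition, $L_n(x)=a_nx+b_n$ affine with $L_n(x_0)=x_{n-1}$, $L_n(x_N)=x_n$, $I_1=[x_0,x_1]$, $I_n=(x_{n-1},x_n]$ for $n\ge2$, and $\alpha=(\alpha_1,\dots,\alpha_N)\in(\mathcal{L}^\infty(I))^N$ with $\Lambda:=\operatorname{ess\,sup}\{|\alpha_n(x)|:x\in I,n=1,\dots,N\}<1$. For $f,b\in E$, $f*_Tb$ is the unique fixed point in $E$ of the contraction $Tg(x):=f(x)+\alpha_n(L_n^{-1}(x))(g-b)(L_n^{-1}(x))$, $x\in I_n$; $0$ is the null function. A sequence $(x_m)$ is bounded if there are constants $0<k\le K$ with $k\le\|x_m\|_p\le K$ for all $m$. *)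

theory Defs
  imports "HOL-Analysis.Analysis" "HOL-Probability.Essential_Supremum"
begin

(* L^p(M) as a set of representatives (elements of E are identified a.e.) *)
definition Lp_space :: "real \<Rightarrow> real measure \<Rightarrow> (real \<Rightarrow> real) set" where
  "Lp_space p M = {f. f \<in> borel_measurable M \<and> integrable M (\<lambda>t. \<bar>f t\<bar> powr p)}"

definition Lp_norm :: "real \<Rightarrow> real measure \<Rightarrow> (real \<Rightarrow> real) \<Rightarrow> real" where
  "Lp_norm p M f = (\<integral>t. \<bar>f t\<bar> powr p \<partial>M) powr (1 / p)"

definition schauder_basis :: "real \<Rightarrow> real measure \<Rightarrow> (nat \<Rightarrow> real \<Rightarrow> real) \<Rightarrow> bool" where
  "schauder_basis p M b \<longleftrightarrow> (\<forall>m. b m \<in> Lp_space p M) \<and>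
     (\<forall>f \<in> Lp_space p M. \<exists>!c :: nat \<Rightarrow> real.
        (\<lambda>n. Lp_norm p M (\<lambda>t. f t - (\<Sum>m<n. c m * b m t))) \<longlonglongrightarrow> 0)"

definition bounded_seq :: "real \<Rightarrow> real measure \<Rightarrow> (nat \<Rightarrow> real \<Rightarrow> real) \<Rightarrow> bool" where
  "bounded_seq p M b \<longleftrightarrow> (\<exists>k K. 0 < k \<and> k \<le> K \<and>
     (\<forall>m. k \<le> Lp_norm p M (b m) \<and> Lp_norm p M (b m) \<le> K))"

definition Isub :: "(nat \<Rightarrow> real) \<Rightarrow> nat \<Rightarrow> real set" where
  "Isub x n = (if n = 1 then {x 0..x 1} else {x (n - 1)<..x n})"

(* inverse of the affine map L_n with L_n(x_0) = x_{n-1}, L_n(x_N) = x_n *)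
definition Linv :: "(nat \<Rightarrow> real) \<Rightarrow> nat \<Rightarrow> nat \<Rightarrow> real \<Rightarrow> real" where
  "Linv x N n y = x 0 + (y - x (n - 1)) * (x N - x 0) / (x n - x (n - 1))"

definition Top :: "(nat \<Rightarrow> real) \<Rightarrow> nat \<Rightarrow> (nat \<Rightarrow> real \<Rightarrow> real) \<Rightarrow> (real \<Rightarrow> real)
    \<Rightarrow> (real \<Rightarrow> real) \<Rightarrow> (real \<Rightarrow> real) \<Rightarrow> real \<Rightarrow> real" where
  "Top x N \<alpha> f b g y = f y + (\<Sum>n\<in>{1..N}. if y \<in> Isub x n then
       \<alpha> n (Linv x N n y) * (g (Linv x N n y) - b (Linv x N n y)) else 0)"

(* f *_T b : the (a.e.-unique) fixed point of T in E = L^p(I) *)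
definition frac_op :: "real \<Rightarrow> (nat \<Rightarrow> real) \<Rightarrow> nat \<Rightarrow> (nat \<Rightarrow> real \<Rightarrow> real) \<Rightarrow> (real \<Rightarrow> real)
    \<Rightarrow> (real \<Rightarrow> real) \<Rightarrow> real \<Rightarrow> real" where
  "frac_op p x N \<alpha> f b = (SOME g. g \<in> Lp_space p (lebesgue_on {x 0..x N}) \<and>
      (AE y in lebesgue_on {x 0..x N}. g y = Top x N \<alpha> f b g y))"

end

theory Submission
  imports Defs
begin

lemma powr_two_point:
  fixes u v p :: real assumes p: "1 \<le> p" and u: "0 \<le> u" and v: "0 \<le> v"
  shows "((u + v) / 2) powr p \<le> (u powr p + v powr p) / 2"
proof (cases "u = 0 \<or> v = 0")
  case True
  have key: "(w / 2) powr p \<le> w powr p / 2" if w: "0 \<le> w" for w :: real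
  proof -
    have "(w / 2) powr p = w powr p / 2 powr p" using w by (simp add: powr_divide)
    also have "\<dots> \<le> w powr p / 2"
      proof (intro divide_left_mono)
      show "2 \<le> 2 powr p" using powr_mono[OF p, of 2] by simp
    qed auto
    finally show ?thesis .
  qed
  show ?thesis using True key[OF u] key[OF v] u v p by auto
next
  case False
  then have "u > 0" "v > 0" using u v by auto
  from convex_onD[OF powr_convex[OF p], of "1/2" u v] this
  show ?thesis by (simp add: field_simps)
qed

lemma abs_add_powr_le:
  fixes a b p :: real assumes p: "1 \<le> p"
  shows "\<bar>a + b\<bar> powr p \<le> 2 powr (p - 1) * (\<bar>a\<bar> powr p + \<bar>b\<bar> powr p)"
proof -
  have "\<bar>a + b\<bar> powr p \<le> (\<bar>a\<bar> + \<bar>b\<bar>) powr p"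
    using p by (intro powr_mono2) auto
  also have "\<dots> = 2 powr p * ((\<bar>a\<bar> + \<bar>b\<bar>) / 2) powr p"
    by (simp add: powr_divide)
  also have "\<dots> \<le> 2 powr p * ((\<bar>a\<bar> powr p + \<bar>b\<bar> powr p) / 2)"
    by (intro mult_left_mono powr_two_point p) auto
  also have "\<dots> = 2 powr (p - 1) * (\<bar>a\<bar> powr p + \<bar>b\<bar> powr p)"
    by (simp add: powr_diff)
  finally show ?thesis .
qed

definition Pn :: "real \<Rightarrow> real measure \<Rightarrow> (real \<Rightarrow> real) \<Rightarrow> ennreal" where
  "Pn p M f = (\<integral>\<^sup>+t. ennreal (\<bar>f t\<bar> powr p) \<partial>M)"

definition Pr :: "real \<Rightarrow> real measure \<Rightarrow> (real \<Rightarrow> real) \<Rightarrow> real" where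
  "Pr p M f = (\<integral>t. \<bar>f t\<bar> powr p \<partial>M)"

lemma Lp_space_iff:
  "f \<in> Lp_space p M \<longleftrightarrow> f \<in> borel_measurable M \<and> Pn p M f < \<infinity>"
  unfolding Lp_space_def Pn_def
  by (auto simp: integrable_iff_bounded)

lemma Pn_Pr: "f \<in> Lp_space p M \<Longrightarrow> Pn p M f = ennreal (Pr p M f)"
  unfolding Lp_space_def Pn_def Pr_def
  by (auto intro!: nn_integral_eq_integral)

lemma Pr_nonneg: "0 \<le> Pr p M f"
  unfolding Pr_def by (auto intro!: integral_nonneg_AE)

lemma Lp_norm_Pr: "Lp_norm p M f = Pr p M f powr (1/p)"
  unfolding Lp_norm_def Pr_def ..

lemma Lp_norm_nonneg: "0 \<le> Lp_norm p M f"
  unfolding Lp_norm_def by simp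

lemma Pn_add:
  assumes p: "1 \<le> p" and [measurable]: "f \<in> borel_measurable M" "g \<in> borel_measurable M"
  shows "Pn p M (\<lambda>t. f t + g t) \<le> ennreal (2 powr (p - 1)) * (Pn p M f + Pn p M g)"
proof -
  have "Pn p M (\<lambda>t. f t + g t) \<le> (\<integral>\<^sup>+t. ennreal (2 powr (p - 1)) * (ennreal (\<bar>f t\<bar> powr p) + ennreal (\<bar>g t\<bar> powr p)) \<partial>M)"
    unfolding Pn_def
    by (intro nn_integral_mono) (auto simp: ennreal_mult[symmetric] ennreal_plus[symmetric] abs_add_powr_le[OF p] simp del: ennreal_plus)
  also have "\<dots> = ennreal (2 powr (p - 1)) * (Pn p M f + Pn p M g)"
    unfolding Pn_def by (subst nn_integral_cmult) (auto simp: nn_integral_add)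
  finally show ?thesis .
qed

lemma Pn_cmult: "f \<in> borel_measurable M \<Longrightarrow>
  Pn p M (\<lambda>t. c * f t) = ennreal (\<bar>c\<bar> powr p) * Pn p M f"
  unfolding Pn_def
  by (subst nn_integral_cmult[symmetric]) (auto simp: abs_mult powr_mult ennreal_mult)

lemma Lp_add: assumes "1 \<le> p" "f \<in> Lp_space p M" "g \<in> Lp_space p M"
  shows "(\<lambda>t. f t + g t) \<in> Lp_space p M"
proof -
  have [measurable]: "f \<in> borel_measurable M" "g \<in> borel_measurable M" and fin: "Pn p M f < \<infinity>" "Pn p M g < \<infinity>"
    using assms by (auto simp: Lp_space_iff)
  have "Pn p M (\<lambda>t. f t + g t) < \<infinity>"
    using Pn_add[OF assms(1), of f M g] fin
    by (auto simp: ennreal_mult_less_top top.not_eq_extremum order.strict_trans1)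
  then show ?thesis by (auto simp: Lp_space_iff)
qed

lemma Lp_cmult: assumes "f \<in> Lp_space p M"
  shows "(\<lambda>t. c * f t) \<in> Lp_space p M"
  using assms by (auto simp: Lp_space_iff Pn_cmult[of f] ennreal_mult_less_top)

lemma Lp_diff: assumes "1 \<le> p" "f \<in> Lp_space p M" "g \<in> Lp_space p M"
  shows "(\<lambda>t. f t - g t) \<in> Lp_space p M"
  using Lp_add[OF assms(1,2) Lp_cmult[OF assms(3), of "-1"]] by simp

lemma Lp_sum: assumes "1 \<le> p" "\<And>m. b m \<in> Lp_space p M"
  shows "(\<lambda>t. \<Sum>m<(n::nat). c m * b m t) \<in> Lp_space p M"
proof (induction n)
  case 0
  then show ?case by (simp add: Lp_space_def)
next
  case (Suc n)
  show ?case using Lp_add[OF assms(1) Suc Lp_cmult[OF assms(2)]] by simp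
qed

lemma Pn_AE_cong: "AE t in M. f t = g t \<Longrightarrow> Pn p M f = Pn p M g"
  unfolding Pn_def by (intro nn_integral_cong_AE) auto

lemma Pr_AE_cong: "AE t in M. f t = g t \<Longrightarrow> f \<in> borel_measurable M \<Longrightarrow> g \<in> borel_measurable M \<Longrightarrow> Pr p M f = Pr p M g"
  unfolding Pr_def by (intro integral_cong_AE) auto

lemma Lp_norm_AE_cong: "AE t in M. f t = g t \<Longrightarrow> f \<in> borel_measurable M \<Longrightarrow> g \<in> borel_measurable M \<Longrightarrow> Lp_norm p M f = Lp_norm p M g"
  using Pr_AE_cong by (simp add: Lp_norm_Pr)

lemma Lp_norm_compare:
  assumes p: "1 \<le> p" and g: "g \<in> Lp_space p M" and h: "h \<in> borel_measurable M" and C: "0 \<le> C"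
    and le: "Pn p M h \<le> ennreal (C powr p) * Pn p M g"
  shows "h \<in> Lp_space p M" "Lp_norm p M h \<le> C * Lp_norm p M g"
proof -
  have fin: "Pn p M h < \<infinity>" using le g
    by (auto simp: Lp_space_iff ennreal_mult_less_top top.not_eq_extremum order.strict_trans1)
  then show hL: "h \<in> Lp_space p M" using h by (auto simp: Lp_space_iff)
  have "ennreal (Pr p M h) \<le> ennreal (C powr p * Pr p M g)"
    using le by (simp add: Pn_Pr[OF hL] Pn_Pr[OF g] ennreal_mult Pr_nonneg)
  then have "Pr p M h \<le> C powr p * Pr p M g"
    by (subst (asm) ennreal_le_iff) (auto intro!: mult_nonneg_nonneg Pr_nonneg)
  then have "Pr p M h powr (1/p) \<le> (C powr p * Pr p M g) powr (1/p)"
    using p by (intro powr_mono2) (auto simp: Pr_nonneg)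
  also have "\<dots> = C * Pr p M g powr (1/p)"
    using p C by (simp add: powr_mult Pr_nonneg powr_powr)
  finally show "Lp_norm p M h \<le> C * Lp_norm p M g" by (simp add: Lp_norm_Pr)
qed


lemma mp_iter:
  assumes T: "T \<in> M \<rightarrow>\<^sub>M M" and D: "distr M M T = M"
  shows "(T ^^ k) \<in> M \<rightarrow>\<^sub>M M \<and> distr M M (T ^^ k) = M"
proof (induction k)
  case 0
  then show ?case by (simp add: distr_id[unfolded id_def])
next
  case (Suc k)
  then have m: "(T ^^ k) \<in> M \<rightarrow>\<^sub>M M" and d: "distr M M (T ^^ k) = M" by auto
  have eq: "T ^^ Suc k = (T ^^ k) \<circ> T" by (rule funpow_Suc_right)
  have m2: "(T ^^ Suc k) \<in> M \<rightarrow>\<^sub>M M" unfolding eq by (rule measurable_comp[OF T m])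
  have "distr M M (T ^^ Suc k) = distr (distr M M T) M (T ^^ k)"
    unfolding eq by (subst distr_distr) (use m T D in auto)
  also have "\<dots> = M" using D d by simp
  finally show ?case using m2 by blast
qed

lemma mp_nn:
  assumes T: "T \<in> M \<rightarrow>\<^sub>M M" and D: "distr M M T = M" and h: "h \<in> borel_measurable M"
  shows "(\<integral>\<^sup>+y. h (T y) \<partial>M) = (\<integral>\<^sup>+y. h y \<partial>M)"
proof -
  have "integral\<^sup>N (distr M M T) h = (\<integral>\<^sup>+y. h (T y) \<partial>M)"
    by (rule nn_integral_distr[OF T]) (simp add: D h)
  then show ?thesis using D by simp
qed

lemma mp_AE:
  assumes T: "T \<in> M \<rightarrow>\<^sub>M M" and D: "distr M M T = M" and P: "AE y in M. P y"
  shows "AE y in M. P (T y)"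
proof -
  have "AE y in distr M M T. P y" unfolding D by (rule P)
  then show ?thesis by (rule AE_distrD[OF T])
qed

lemma telescope_sum: "(\<Sum>n\<in>{1..(K::nat)}. f n - f (n - 1)) = f K - (f 0 :: real)"
  by (induction K) (auto simp: sum.cl_ivl_Suc)

locale frs =
  fixes p :: real and N :: nat and x :: "nat \<Rightarrow> real" and \<alpha> :: "nat \<Rightarrow> real \<Rightarrow> real"
  assumes p1: "1 \<le> p" and N2: "2 \<le> N" and xmono: "\<forall>i<N. x i < x (Suc i)"
    and \<alpha>m: "\<forall>n\<in>{1..N}. \<alpha> n \<in> borel_measurable (lebesgue_on {x 0..x N})"
    and \<alpha>b: "\<forall>n\<in>{1..N}. AE t in lebesgue_on {x 0..x N}. \<bar>\<alpha> n t\<bar> \<le> 1/2"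
begin

abbreviation "I \<equiv> {x 0..x N}"
abbreviation "M \<equiv> lebesgue_on I"

lemma xlt: "i < j \<Longrightarrow> j \<le> N \<Longrightarrow> x i < x j"
proof (induction j)
  case 0 then show ?case by simp
next
  case (Suc j)
  have "x j < x (Suc j)" using xmono Suc.prems by auto
  moreover have "i \<noteq> j \<Longrightarrow> x i < x j" using Suc by auto
  ultimately show ?case by (cases "i = j") auto
qed

lemma xle: assumes "i \<le> j" "j \<le> N" shows "x i \<le> x j"
proof (cases "i = j")
  case True then show ?thesis by simp
next
  case False then show ?thesis using xlt[of i j] assms by simp
qed

lemma Isub_sub: "n \<in> {1..N} \<Longrightarrow> Isub x n \<subseteq> {x (n - 1)..x n}"
  by (auto simp: Isub_def)

lemma Isub_I: assumes n: "n \<in> {1..N}" shows "Isub x n \<subseteq> I"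
proof
  fix y assume "y \<in> Isub x n"
  then have y: "x (n - 1) \<le> y" "y \<le> x n" using Isub_sub[OF n] by auto
  have "x 0 \<le> x (n - 1)" using n by (intro xle) auto
  moreover have "x n \<le> x N" using n by (intro xle) auto
  ultimately show "y \<in> I" using y by simp
qed

lemma Isub_disj:
  assumes "n \<in> {1..N}" "m \<in> {1..N}" "y \<in> Isub x n" "y \<in> Isub x m" shows "n = m"
proof (rule ccontr)
  assume ne: "n \<noteq> m"
  have *: False if "n < m" "n \<in> {1..N}" "m \<in> {1..N}" "y \<in> Isub x n" "y \<in> Isub x m" for n m
  proof -
    have "y \<le> x n" using that Isub_sub[of n] by auto
    moreover have "x n \<le> x (m - 1)" using that by (intro xle) auto
    moreover have "x (m - 1) < y" using that by (auto simp: Isub_def split: if_splits)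
    ultimately show False by simp
  qed
  show False using ne *[of n m] *[of m n] assms by (cases "n < m") auto
qed

lemma Isub_cover: assumes "y \<in> I" shows "\<exists>n\<in>{1..N}. y \<in> Isub x n"
proof (cases "y = x 0")
  case True
  then show ?thesis using N2 xle[of 0 1] by (intro bexI[of _ 1]) (auto simp: Isub_def)
next
  case False
  define n where "n = (LEAST n. y \<le> x n)"
  have yN: "y \<le> x N" using assms by auto
  have n1: "y \<le> x n" unfolding n_def by (rule LeastI[of _ N]) (rule yN)
  have nN: "n \<le> N" unfolding n_def by (rule Least_le) (rule yN)
  have n0: "n \<noteq> 0"
  proof
    assume "n = 0" then have "y \<le> x 0" using n1 by simp
    then show False using False assms by auto
  qed
  have lt: "x (n - 1) < y" using not_less_Least[of "n - 1" "\<lambda>n. y \<le> x n"] n0 unfolding n_def[symmetric] by simp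
  show ?thesis using n0 nN n1 lt by (intro bexI[of _ n]) (auto simp: Isub_def)
qed

lemma sum_single:
  assumes "n0 \<in> {1..N}" "y \<in> Isub x n0"
  shows "(\<Sum>n\<in>{1..N}. if y \<in> Isub x n then G n else 0) = G n0"
proof -
  have "(\<Sum>n\<in>{1..N}. if y \<in> Isub x n then G n else 0) = (\<Sum>n\<in>{1..N}. if n = n0 then G n else 0)"
    using assms Isub_disj by (intro sum.cong) auto
  also have "\<dots> = G n0" using assms by simp
  finally show ?thesis .
qed

definition phi :: "real \<Rightarrow> real" where
  "phi y = (\<Sum>n\<in>{1..N}. if y \<in> Isub x n then Linv x N n y else 0)"

definition a :: "real \<Rightarrow> real" where
  "a y = (\<Sum>n\<in>{1..N}. if y \<in> Isub x n then \<alpha> n (Linv x N n y) else 0)"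

lemma phi_eq: "n \<in> {1..N} \<Longrightarrow> y \<in> Isub x n \<Longrightarrow> phi y = Linv x N n y"
  unfolding phi_def by (rule sum_single)

lemma a_eq: "n \<in> {1..N} \<Longrightarrow> y \<in> Isub x n \<Longrightarrow> a y = \<alpha> n (phi y)"
  unfolding a_def using phi_eq by (subst sum_single) auto

lemma Linv_I: assumes "n \<in> {1..N}" "y \<in> Isub x n" shows "Linv x N n y \<in> I"
proof -
  have d: "x (n - 1) < x n" using assms by (intro xlt) auto
  have D: "x 0 < x N" using N2 by (intro xlt) auto
  have y: "x (n - 1) \<le> y" "y \<le> x n" using Isub_sub[OF assms(1)] assms(2) by auto
  define r where "r = (y - x (n - 1)) / (x n - x (n - 1))"
  have r0: "0 \<le> r" unfolding r_def using y d by simp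
  have r1: "r \<le> 1" unfolding r_def using y d by (simp add: divide_le_eq_1_pos)
  have eq: "Linv x N n y = x 0 + r * (x N - x 0)" unfolding r_def Linv_def by simp
  have "r * (x N - x 0) \<le> x N - x 0" using mult_right_mono[OF r1, of "x N - x 0"] D by simp
  moreover have "0 \<le> r * (x N - x 0)" using r0 D by simp
  ultimately show ?thesis unfolding eq atLeastAtMost_iff by linarith
qed

lemma phi_I: assumes "y \<in> I" shows "phi y \<in> I"
proof -
  obtain n where n: "n \<in> {1..N}" "y \<in> Isub x n" using Isub_cover[OF assms] by blast
  show ?thesis using phi_eq[OF n] Linv_I[OF n] by simp
qed

lemma Top_eq: "Top x N \<alpha> f b g y = f y + a y * (g (phi y) - b (phi y))"
proof (cases "\<exists>n\<in>{1..N}. y \<in> Isub x n")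
  case True
  then obtain n where n: "n \<in> {1..N}" "y \<in> Isub x n" by auto
  show ?thesis unfolding Top_def
    by (subst sum_single[OF n]) (simp add: a_eq[OF n] phi_eq[OF n])
next
  case False
  then have "a y = 0" unfolding a_def by (intro sum.neutral ballI) simp
  moreover have "(\<Sum>n\<in>{1..N}. if y \<in> Isub x n then
       \<alpha> n (Linv x N n y) * (g (Linv x N n y) - b (Linv x N n y)) else 0) = 0"
    using False by (intro sum.neutral ballI) simp
  ultimately show ?thesis unfolding Top_def by simp
qed

end


context frs begin

lemma I_sets: "I \<in> sets lebesgue" by simp

lemma sets_M: "A \<in> sets M \<longleftrightarrow> A \<subseteq> I \<and> A \<in> sets lebesgue"
  by (subst sets_restrict_space_iff) auto

lemma space_M: "space M = I" by simp

lemma emeasure_M: "A \<subseteq> I \<Longrightarrow> emeasure M A = emeasure lebesgue A"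
  by (rule emeasure_restrict_space) auto

definition cc :: "nat \<Rightarrow> real" where "cc n = (x N - x 0) / (x n - x (n - 1))"
definition mm :: "nat \<Rightarrow> real" where "mm n = (x n - x (n - 1)) / (x N - x 0)"
definition LL :: "nat \<Rightarrow> real \<Rightarrow> real" where "LL n t = mm n *\<^sub>R t + (x (n - 1) - x 0 * mm n)"

lemma dpos: "n \<in> {1..N} \<Longrightarrow> x (n - 1) < x n" by (intro xlt) auto
lemma Dpos: "x 0 < x N" using N2 by (intro xlt) auto

lemma mm_pos: "n \<in> {1..N} \<Longrightarrow> 0 < mm n"
  using dpos Dpos by (simp add: mm_def)

lemma Linv_cc: "Linv x N n y = x 0 + (y - x (n - 1)) * cc n"
  by (simp add: Linv_def cc_def)

lemma LL_mm: "LL n t = x (n - 1) + (t - x 0) * mm n"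
  by (simp add: LL_def algebra_simps)

lemma cc_mm: "n \<in> {1..N} \<Longrightarrow> cc n * mm n = 1"
  using dpos[of n] Dpos by (simp add: cc_def mm_def)

lemma Linv_affine: "n \<in> {1..N} \<Longrightarrow> Linv x N n = (\<lambda>y. (x 0 - x (n - 1) * cc n) + cc n * y)"
  by (rule ext) (simp add: Linv_cc algebra_simps)

lemma Linv_LL: assumes "n \<in> {1..N}" shows "Linv x N n (LL n t) = t"
proof -
  have "Linv x N n (LL n t) = x 0 + (t - x 0) * (cc n * mm n)"
    by (simp add: Linv_cc LL_mm algebra_simps)
  then show ?thesis using cc_mm[OF assms] by simp
qed

lemma LL_Linv: assumes "n \<in> {1..N}" shows "LL n (Linv x N n y) = y"
proof -
  have "LL n (Linv x N n y) = x (n - 1) + (y - x (n - 1)) * (cc n * mm n)"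
    by (simp add: Linv_cc LL_mm algebra_simps)
  then show ?thesis using cc_mm[OF assms] by simp
qed

lemma Linv_meas: assumes n: "n \<in> {1..N}" shows "Linv x N n \<in> lebesgue \<rightarrow>\<^sub>M lebesgue"
proof -
  have c: "cc n \<noteq> 0" using dpos[OF n] Dpos by (simp add: cc_def)
  have "(\<lambda>y. (x 0 - x (n - 1) * cc n) + (\<Sum>j\<in>Basis. (cc n * (y \<bullet> j)) *\<^sub>R j)) \<in> lebesgue \<rightarrow>\<^sub>M lebesgue"
    using c by (intro lebesgue_affine_measurable) auto
  then show ?thesis by (simp add: Linv_affine[OF n])
qed

lemma Linv_vimage: assumes n: "n \<in> {1..N}" shows "Linv x N n -` A = LL n ` A"
proof (intro set_eqI iffI)
  fix y assume "y \<in> Linv x N n -` A"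
  then have "Linv x N n y \<in> A" by simp
  then show "y \<in> LL n ` A" using LL_Linv[OF n, of y] by (metis rev_image_eqI)
next
  fix y assume "y \<in> LL n ` A"
  then obtain t where "t \<in> A" "y = LL n t" by auto
  then show "y \<in> Linv x N n -` A" using Linv_LL[OF n] by simp
qed

lemma emeasure_Linv_vimage:
  assumes n: "n \<in> {1..N}"
  shows "emeasure lebesgue (Linv x N n -` A) = ennreal (mm n) * emeasure lebesgue A"
proof -
  have "emeasure lebesgue (LL n ` A) = ennreal (mm n) * emeasure lebesgue A"
    unfolding LL_def using emeasure_lebesgue_affine[of "mm n" "x (n - 1) - x 0 * mm n" A] mm_pos[OF n]
    by simp
  then show ?thesis by (simp add: Linv_vimage[OF n])
qed

lemma LL_range: assumes n: "n \<in> {1..N}" and t: "t \<in> I" shows "LL n t \<in> {x (n - 1)..x n}"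
proof -
  have d: "x (n - 1) < x n" using dpos[OF n] .
  have m: "0 < mm n" using mm_pos[OF n] .
  have "0 \<le> (t - x 0) * mm n" using t m by simp
  moreover have "(t - x 0) * mm n \<le> (x N - x 0) * mm n"
    using t m by (intro mult_right_mono) auto
  moreover have "(x N - x 0) * mm n = x n - x (n - 1)" using Dpos by (simp add: mm_def)
  ultimately show ?thesis unfolding LL_mm atLeastAtMost_iff by linarith
qed

lemma emeasure_Isub_Linv:
  assumes n: "n \<in> {1..N}" and A: "A \<in> sets M"
  shows "emeasure lebesgue (Isub x n \<inter> Linv x N n -` A) = ennreal (mm n) * emeasure lebesgue A"
proof -
  have AI: "A \<subseteq> I" and AL: "A \<in> sets lebesgue" using A by (auto simp: sets_M)
  define B where "B = Linv x N n -` A"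
  have BL: "B \<in> sets lebesgue" unfolding B_def
    using measurable_sets[OF Linv_meas[OF n] AL] by simp
  have Bsub: "B \<subseteq> {x (n - 1)..x n}" unfolding B_def Linv_vimage[OF n] using LL_range[OF n] AI by auto
  have Bdec: "B = (Isub x n \<inter> B) \<union> (B \<inter> {x (n - 1)})"
    using Bsub by (auto simp: Isub_def)
  have null: "B \<inter> {x (n - 1)} \<in> null_sets lebesgue"
    by (rule null_sets_completion_subset[of _ "{x (n - 1)}"]) (auto intro!: null_sets_completionI countable_imp_null_set_lborel)
  have IsL: "Isub x n \<in> sets lebesgue" by (simp add: Isub_def)
  have "emeasure lebesgue B = emeasure lebesgue (Isub x n \<inter> B)"
    by (subst Bdec, rule emeasure_Un_null_set) (use BL IsL null in auto)
  then show ?thesis using emeasure_Linv_vimage[OF n, of A] unfolding B_def by simp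
qed

lemma sum_mm: "(\<Sum>n\<in>{1..N}. mm n) = 1"
proof -
  have "(\<Sum>n\<in>{1..N}. mm n) = (\<Sum>n\<in>{1..N}. x n - x (n - 1)) / (x N - x 0)"
    by (simp add: mm_def sum_divide_distrib)
  also have "\<dots> = 1" unfolding telescope_sum using Dpos by simp
  finally show ?thesis .
qed

lemma phi_pre: "A \<subseteq> I \<Longrightarrow> phi -` A \<inter> I = (\<Union>n\<in>{1..N}. Isub x n \<inter> Linv x N n -` A)"
  using Isub_cover phi_eq Isub_I by fastforce

lemma Isub_sets: "Isub x n \<in> sets lebesgue" by (simp add: Isub_def)

lemma Linv_pre_sets: "n \<in> {1..N} \<Longrightarrow> A \<in> sets lebesgue \<Longrightarrow> Linv x N n -` A \<in> sets lebesgue"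
  using measurable_sets[OF Linv_meas] by simp

lemma UN_sets: "A \<in> sets lebesgue \<Longrightarrow> (\<Union>n\<in>{1..N}. Isub x n \<inter> Linv x N n -` A) \<in> sets lebesgue"
  by (intro sets.finite_UN ballI sets.Int Isub_sets Linv_pre_sets) auto

lemma phi_meas: "phi \<in> M \<rightarrow>\<^sub>M M"
proof (rule measurableI)
  fix y assume "y \<in> space M" then show "phi y \<in> space M" using phi_I by simp
next
  fix A assume A: "A \<in> sets M"
  then have AI: "A \<subseteq> I" and AL: "A \<in> sets lebesgue" by (auto simp: sets_M)
  have "(\<Union>n\<in>{1..N}. Isub x n \<inter> Linv x N n -` A) \<in> sets lebesgue"
    using UN_sets[OF AL] .
  moreover have "(\<Union>n\<in>{1..N}. Isub x n \<inter> Linv x N n -` A) \<subseteq> I" using Isub_I by blast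
  ultimately show "phi -` A \<inter> space M \<in> sets M" using phi_pre[OF AI] by (simp add: sets_M)
qed

lemma phi_emeasure: assumes A: "A \<in> sets M"
  shows "emeasure M (phi -` A \<inter> space M) = emeasure M A"
proof -
  have AI: "A \<subseteq> I" using A by (auto simp: sets_M)
  have sub: "(\<Union>n\<in>{1..N}. Isub x n \<inter> Linv x N n -` A) \<subseteq> I" using Isub_I by blast
  have "emeasure M (phi -` A \<inter> space M) = emeasure lebesgue (\<Union>n\<in>{1..N}. Isub x n \<inter> Linv x N n -` A)"
    using phi_pre[OF AI] sub by (simp add: emeasure_M)
  also have "\<dots> = (\<Sum>n\<in>{1..N}. emeasure lebesgue (Isub x n \<inter> Linv x N n -` A))"
  proof (rule sum_emeasure[symmetric])
    show "(\<lambda>n. Isub x n \<inter> Linv x N n -` A) ` {1..N} \<subseteq> sets lebesgue"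
      using measurable_sets[OF Linv_meas] A by (auto simp: Isub_def sets_M)
    show "disjoint_family_on (\<lambda>n. Isub x n \<inter> Linv x N n -` A) {1..N}"
      unfolding disjoint_family_on_def using Isub_disj by blast
  qed simp
  also have "\<dots> = (\<Sum>n\<in>{1..N}. ennreal (mm n) * emeasure lebesgue A)"
    using emeasure_Isub_Linv A by simp
  also have "\<dots> = ennreal (\<Sum>n\<in>{1..N}. mm n) * emeasure lebesgue A"
  proof -
    have "(\<Sum>n\<in>{1..N}. ennreal (mm n)) = ennreal (\<Sum>n\<in>{1..N}. mm n)"
      by (rule sum_ennreal) (use mm_pos in force)
    then show ?thesis by (simp add: sum_distrib_right[symmetric])
  qed
  also have "\<dots> = emeasure M A" using sum_mm AI by (simp add: emeasure_M)
  finally show ?thesis .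
qed

lemma phi_distr: "distr M M phi = M"
proof (rule measure_eqI)
  fix A assume "A \<in> sets (distr M M phi)"
  then have A: "A \<in> sets M" by simp
  show "emeasure (distr M M phi) A = emeasure M A"
    by (subst emeasure_distr[OF phi_meas A]) (rule phi_emeasure[OF A])
qed simp

end


context frs begin

lemma phi_iter: "(phi ^^ k) \<in> M \<rightarrow>\<^sub>M M \<and> distr M M (phi ^^ k) = M"
  by (rule mp_iter[OF phi_meas phi_distr])

lemma comp_phi_meas: "g \<in> borel_measurable M \<Longrightarrow> (\<lambda>y. g (phi y)) \<in> borel_measurable M"
  using measurable_comp[OF phi_meas] by (simp add: comp_def)

lemma a_alt: "a y = (\<Sum>n\<in>{1..N}. indicator (Isub x n) y * \<alpha> n (phi y))"
  unfolding a_def by (intro sum.cong) (auto simp: phi_eq)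

lemma a_meas: "a \<in> borel_measurable M"
proof -
  have "(\<lambda>y. \<Sum>n\<in>{1..N}. indicator (Isub x n) y * \<alpha> n (phi y)) \<in> borel_measurable M"
  proof (intro borel_measurable_sum borel_measurable_times)
    fix n assume n: "n \<in> {1..N}"
    show "(\<lambda>y. \<alpha> n (phi y)) \<in> borel_measurable M" using \<alpha>m n comp_phi_meas by blast
    have "Isub x n \<in> sets M" using Isub_I[OF n] Isub_sets by (simp add: sets_M)
    then show "indicator (Isub x n) \<in> borel_measurable M" by simp
  qed
  then show ?thesis by (simp add: a_alt[abs_def])
qed

lemma a_bound: "AE y in M. \<bar>a y\<bar> \<le> 1/2"
proof -
  have "AE t in M. \<forall>n\<in>{1..N}. \<bar>\<alpha> n t\<bar> \<le> 1/2"
    by (rule AE_finite_allI) (use \<alpha>b in auto)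
  then have "AE y in M. \<forall>n\<in>{1..N}. \<bar>\<alpha> n (phi y)\<bar> \<le> 1/2"
    by (rule mp_AE[OF phi_meas phi_distr])
  then show ?thesis
  proof (rule AE_mp[OF _ AE_I2], intro impI)
    fix y assume y: "y \<in> space M" and H: "\<forall>n\<in>{1..N}. \<bar>\<alpha> n (phi y)\<bar> \<le> 1/2"
    have yI: "y \<in> I" using y by simp
    obtain n where n: "n \<in> {1..N}" "y \<in> Isub x n" using Isub_cover[OF yI] by blast
    show "\<bar>a y\<bar> \<le> 1/2" using a_eq[OF n] H n by simp
  qed
qed

lemma lin1: "(Y::real) \<le> (u + w) / 2 \<Longrightarrow> X \<le> u \<Longrightarrow> w \<le> X \<Longrightarrow> Y \<le> u"
  by (simp add: field_simps)

lemma lin2: "(X::real) \<le> (u + w) / 2 \<Longrightarrow> w \<le> X \<Longrightarrow> X \<le> u"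
  by (simp add: field_simps)

definition Aop :: "(real \<Rightarrow> real) \<Rightarrow> real \<Rightarrow> real" where
  "Aop g = (\<lambda>y. a y * g (phi y))"

lemma Aop_meas: "g \<in> borel_measurable M \<Longrightarrow> Aop g \<in> borel_measurable M"
  unfolding Aop_def using a_meas comp_phi_meas by (intro borel_measurable_times) auto

lemma Pn_phi: "g \<in> borel_measurable M \<Longrightarrow> Pn p M (\<lambda>y. g (phi y)) = Pn p M g"
  unfolding Pn_def by (rule mp_nn[OF phi_meas phi_distr, where h = "\<lambda>t. ennreal (\<bar>g t\<bar> powr p)"]) simp

lemma Pn_Aop: assumes g: "g \<in> borel_measurable M"
  shows "Pn p M (Aop g) \<le> ennreal ((1/2) powr p) * Pn p M g"
proof -
  have "Pn p M (Aop g) \<le> (\<integral>\<^sup>+y. ennreal ((1/2) powr p) * ennreal (\<bar>g (phi y)\<bar> powr p) \<partial>M)"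
    unfolding Pn_def Aop_def
  proof (rule nn_integral_mono_AE, rule AE_mp[OF a_bound AE_I2], intro impI)
    fix y assume "\<bar>a y\<bar> \<le> 1/2"
    then have "\<bar>a y\<bar> powr p \<le> (1/2) powr p" using p1 by (intro powr_mono2) auto
    then have "\<bar>a y * g (phi y)\<bar> powr p \<le> (1/2) powr p * \<bar>g (phi y)\<bar> powr p"
      by (simp add: abs_mult powr_mult mult_right_mono)
    then show "ennreal (\<bar>a y * g (phi y)\<bar> powr p) \<le> ennreal ((1/2) powr p) * ennreal (\<bar>g (phi y)\<bar> powr p)"
      by (simp add: ennreal_mult[symmetric])
  qed
  also have "\<dots> = ennreal ((1/2) powr p) * Pn p M (\<lambda>y. g (phi y))"
    unfolding Pn_def using comp_phi_meas[OF g] by (subst nn_integral_cmult) auto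
  finally show ?thesis using Pn_phi[OF g] by simp
qed

lemma Aop_Lp: assumes h: "h \<in> Lp_space p M"
  shows "Aop h \<in> Lp_space p M" "Lp_norm p M (Aop h) \<le> 1/2 * Lp_norm p M h"
proof -
  have hm: "h \<in> borel_measurable M" using h by (simp add: Lp_space_def)
  show "Aop h \<in> Lp_space p M" "Lp_norm p M (Aop h) \<le> 1/2 * Lp_norm p M h"
    using Lp_norm_compare[OF p1 h Aop_meas[OF hm], of "1/2"] Pn_Aop[OF hm] by auto
qed

definition Bop :: "(real \<Rightarrow> real) \<Rightarrow> real \<Rightarrow> real" where
  "Bop g = (\<lambda>y. g y - a y * g (phi y))"

lemma Bop_Lp: assumes h: "h \<in> Lp_space p M" shows "Bop h \<in> Lp_space p M"
  unfolding Bop_def using Lp_diff[OF p1 h Aop_Lp(1)[OF h]] by (simp add: Aop_def)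

lemma Pn_neg: "Pn p M (\<lambda>t. - f t) = Pn p M f"
  unfolding Pn_def by simp

lemma Bop_upper: assumes h: "h \<in> Lp_space p M"
  shows "Lp_norm p M (Bop h) \<le> 2 * Lp_norm p M h"
proof -
  have hm: "h \<in> borel_measurable M" using h by (simp add: Lp_space_def)
  have AL: "Aop h \<in> Lp_space p M" using Aop_Lp[OF h] by simp
  have Am: "Aop h \<in> borel_measurable M" using AL by (simp add: Lp_space_def)
  have BL: "Bop h \<in> Lp_space p M" using Bop_Lp[OF h] .
  define X where "X = Pr p M h"
  define Y where "Y = Pr p M (Bop h)"
  define Z where "Z = Pr p M (Aop h)"
  have X0: "0 \<le> X" "0 \<le> Y" "0 \<le> Z" unfolding X_def Y_def Z_def by (auto simp: Pr_nonneg)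
  have q: "0 < (2::real) powr p" by simp
  have "Pn p M (Bop h) = Pn p M (\<lambda>t. h t + (- Aop h t))"
    unfolding Bop_def Aop_def by simp
  also have "\<dots> \<le> ennreal (2 powr (p - 1)) * (Pn p M h + Pn p M (\<lambda>t. - Aop h t))"
    by (rule Pn_add[OF p1 hm]) (use Am in simp)
  finally have "ennreal Y \<le> ennreal (2 powr (p - 1)) * (ennreal X + ennreal Z)"
    by (simp add: Pn_neg Y_def X_def Z_def Pn_Pr[OF h] Pn_Pr[OF AL] Pn_Pr[OF BL])
  then have e1: "Y \<le> 2 powr (p - 1) * (X + Z)"
    using X0 by (simp add: ennreal_plus[symmetric] ennreal_mult[symmetric] ennreal_le_iff del: ennreal_plus)
  have "ennreal Z \<le> ennreal ((1/2) powr p) * ennreal X"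
    using Pn_Aop[OF hm] by (simp add: Z_def X_def Pn_Pr[OF h] Pn_Pr[OF AL])
  then have "Z \<le> (1/2) powr p * X"
    using X0 by (simp add: ennreal_mult[symmetric] ennreal_le_iff)
  then have e2: "2 powr p * Z \<le> X"
    using q by (simp add: powr_divide field_simps)
  have e3: "2 powr (p - 1) = 2 powr p / 2" by (simp add: powr_diff)
  have "Y \<le> (2 powr p * X + 2 powr p * Z) / 2" using e1 e3 by (simp add: algebra_simps)
  moreover have "1 * X \<le> 2 powr p * X" using X0 p1 by (intro mult_right_mono) (auto intro: ge_one_powr_ge_zero)
  ultimately have "Y \<le> 2 powr p * X" using e2 by (intro lin1[of Y "2 powr p * X" "2 powr p * Z" X]) auto
  then have "Pn p M (Bop h) \<le> ennreal (2 powr p) * Pn p M h"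
    using X0 by (simp add: Y_def X_def Pn_Pr[OF h] Pn_Pr[OF BL] ennreal_mult[symmetric])
  then show ?thesis
    using Lp_norm_compare(2)[OF p1 h _ _, of "Bop h" 2] BL by (simp add: Lp_space_def)
qed

lemma Bop_lower: assumes h: "h \<in> Lp_space p M"
  shows "Lp_norm p M h \<le> 2 * Lp_norm p M (Bop h)"
proof -
  have AL: "Aop h \<in> Lp_space p M" using Aop_Lp[OF h] by simp
  have hm: "h \<in> borel_measurable M" using h by (simp add: Lp_space_def)
  have Am: "Aop h \<in> borel_measurable M" using AL by (simp add: Lp_space_def)
  have BL: "Bop h \<in> Lp_space p M" using Bop_Lp[OF h] .
  have Bm: "Bop h \<in> borel_measurable M" using BL by (simp add: Lp_space_def)
  define X where "X = Pr p M h"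
  define Y where "Y = Pr p M (Bop h)"
  define Z where "Z = Pr p M (Aop h)"
  have X0: "0 \<le> X" "0 \<le> Y" "0 \<le> Z" unfolding X_def Y_def Z_def by (auto simp: Pr_nonneg)
  have q: "0 < (2::real) powr p" by simp
  have "Pn p M h = Pn p M (\<lambda>t. Bop h t + Aop h t)"
    unfolding Bop_def Aop_def by simp
  also have "\<dots> \<le> ennreal (2 powr (p - 1)) * (Pn p M (Bop h) + Pn p M (Aop h))"
    by (rule Pn_add[OF p1 Bm Am])
  finally have "ennreal X \<le> ennreal (2 powr (p - 1)) * (ennreal Y + ennreal Z)"
    by (simp add: Y_def X_def Z_def Pn_Pr[OF h] Pn_Pr[OF AL] Pn_Pr[OF BL])
  then have e1: "X \<le> 2 powr (p - 1) * (Y + Z)"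
    using X0 by (simp add: ennreal_plus[symmetric] ennreal_mult[symmetric] ennreal_le_iff del: ennreal_plus)
  have "ennreal Z \<le> ennreal ((1/2) powr p) * ennreal X"
    using Pn_Aop[OF hm] by (simp add: Z_def X_def Pn_Pr[OF h] Pn_Pr[OF AL])
  then have "Z \<le> (1/2) powr p * X"
    using X0 by (simp add: ennreal_mult[symmetric] ennreal_le_iff)
  then have e2: "2 powr p * Z \<le> X"
    using q by (simp add: powr_divide field_simps)
  have e3: "2 powr (p - 1) = 2 powr p / 2" by (simp add: powr_diff)
  have "X \<le> (2 powr p * Y + 2 powr p * Z) / 2" using e1 e3 by (simp add: algebra_simps)
  then have "X \<le> 2 powr p * Y" using e2 by (intro lin2[of X "2 powr p * Y" "2 powr p * Z"])
  then have "Pn p M h \<le> ennreal (2 powr p) * Pn p M (Bop h)"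
    using X0 by (simp add: Y_def X_def Pn_Pr[OF h] Pn_Pr[OF BL] ennreal_mult[symmetric])
  then show ?thesis
    using Lp_norm_compare(2)[OF p1 BL hm, of 2] by simp
qed

end


lemma jensen_fin:
  fixes p :: real assumes p: "1 \<le> p"
  shows "(\<And>k. 0 \<le> c k) \<Longrightarrow> (\<Sum>k<n. (1/2)^(Suc k) * c k) powr p \<le> (\<Sum>k<n. (1/2)^(Suc k) * c k powr p)"
proof (induction n arbitrary: c)
  case 0
  then show ?case by simp
next
  case (Suc n)
  define s where "s = (\<Sum>k<n. (1/2)^(Suc k) * c (Suc k))"
  have s0: "0 \<le> s" unfolding s_def using Suc.prems by (auto intro!: sum_nonneg)
  have IH: "s powr p \<le> (\<Sum>k<n. (1/2)^(Suc k) * c (Suc k) powr p)"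
    unfolding s_def by (rule Suc.IH) (use Suc.prems in auto)
  have h1: "(\<Sum>k<n. (1/2)^(Suc (Suc k)) * c (Suc k)) = (1/2) * s"
    unfolding s_def sum_distrib_left by (intro sum.cong) auto
  have eq1: "(\<Sum>k<Suc n. (1/2)^(Suc k) * c k) = (c 0 + s) / 2"
    unfolding sum.lessThan_Suc_shift h1 by simp
  have h2: "(\<Sum>k<n. (1/2)^(Suc (Suc k)) * c (Suc k) powr p) = (1/2) * (\<Sum>k<n. (1/2)^(Suc k) * c (Suc k) powr p)"
    unfolding sum_distrib_left by (intro sum.cong) auto
  have eq2: "(\<Sum>k<Suc n. (1/2)^(Suc k) * c k powr p) = (c 0 powr p + (\<Sum>k<n. (1/2)^(Suc k) * c (Suc k) powr p)) / 2"
    unfolding sum.lessThan_Suc_shift h2 by simp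
  have "((c 0 + s) / 2) powr p \<le> (c 0 powr p + s powr p) / 2"
    by (rule powr_two_point[OF p]) (use Suc.prems s0 in auto)
  also have "\<dots> \<le> (c 0 powr p + (\<Sum>k<n. (1/2)^(Suc k) * c (Suc k) powr p)) / 2"
    using IH by simp
  finally show ?case unfolding eq1 eq2 .
qed

lemma jensen_inf:
  fixes p :: real assumes p: "1 \<le> p" and c: "\<And>k. 0 \<le> c k"
    and s1: "summable (\<lambda>k. (1/2)^(Suc k) * c k)"
    and s2: "summable (\<lambda>k. (1/2)^(Suc k) * c k powr p)"
  shows "(\<Sum>k. (1/2)^(Suc k) * c k) powr p \<le> (\<Sum>k. (1/2)^(Suc k) * c k powr p)"
proof (rule LIMSEQ_le)
  have t1: "(\<lambda>n. \<Sum>k<n. (1/2)^(Suc k) * c k) \<longlonglongrightarrow> (\<Sum>k. (1/2)^(Suc k) * c k)"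
    using summable_LIMSEQ[OF s1] .
  show "(\<lambda>n. (\<Sum>k<n. (1/2)^(Suc k) * c k) powr p) \<longlonglongrightarrow> (\<Sum>k. (1/2)^(Suc k) * c k) powr p"
    by (rule tendsto_powr'[OF t1 tendsto_const]) (use p c in \<open>auto intro!: always_eventually sum_nonneg\<close>)
  show "(\<lambda>n. \<Sum>k<n. (1/2)^(Suc k) * c k powr p) \<longlonglongrightarrow> (\<Sum>k. (1/2)^(Suc k) * c k powr p)"
    using summable_LIMSEQ[OF s2] .
  show "\<exists>N. \<forall>n\<ge>N. (\<Sum>k<n. (1/2)^(Suc k) * c k) powr p \<le> (\<Sum>k<n. (1/2)^(Suc k) * c k powr p)"
  proof (intro exI allI impI)
    fix n :: nat
    show "(\<Sum>k<n. (1/2)^(Suc k) * c k) powr p \<le> (\<Sum>k<n. (1/2)^(Suc k) * c k powr p)"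
      by (rule jensen_fin[OF p]) (rule c)
  qed
qed

lemma le_one_plus_powr: fixes c p :: real assumes "0 \<le> c" "1 \<le> p" shows "c \<le> 1 + c powr p"
proof (cases "c \<le> 1")
  case True
  then show ?thesis using assms by (simp add: add_increasing2)
next
  case False
  then have "c powr 1 \<le> c powr p" using assms by (intro powr_mono) auto
  then show ?thesis using False by simp
qed

context frs begin

primrec wt :: "nat \<Rightarrow> real \<Rightarrow> real" where
  "wt 0 y = 1"
| "wt (Suc k) y = a y * wt k (phi y)"

lemma wt_meas: "wt k \<in> borel_measurable M"
proof (induction k)
  case 0 then show ?case by simp
next
  case (Suc k)
  have "(\<lambda>y. wt k (phi y)) \<in> borel_measurable M" using comp_phi_meas[OF Suc] .
  then show ?case using a_meas by (simp add: borel_measurable_times)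
qed

lemma iter_meas: "g \<in> borel_measurable M \<Longrightarrow> (\<lambda>y. g ((phi ^^ k) y)) \<in> borel_measurable M"
  using measurable_comp[OF conjunct1[OF phi_iter[of k]]] by (simp add: comp_def)

lemma wt_bound: "(\<forall>j. \<bar>a ((phi ^^ j) y)\<bar> \<le> 1/2) \<Longrightarrow> \<bar>wt k y\<bar> \<le> (1/2)^k"
proof (induction k arbitrary: y)
  case 0 then show ?case by simp
next
  case (Suc k)
  have "\<forall>j. \<bar>a ((phi ^^ j) (phi y))\<bar> \<le> 1/2"
  proof
    fix j show "\<bar>a ((phi ^^ j) (phi y))\<bar> \<le> 1/2"
      using Suc.prems[rule_format, of "Suc j"] by (simp add: funpow_Suc_right del: funpow.simps)
  qed
  then have "\<bar>wt k (phi y)\<bar> \<le> (1/2)^k" by (rule Suc.IH)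
  moreover have "\<bar>a y\<bar> \<le> 1/2" using Suc.prems[rule_format, of 0] by simp
  ultimately have "\<bar>a y\<bar> * \<bar>wt k (phi y)\<bar> \<le> (1/2) * (1/2)^k" by (intro mult_mono) auto
  then show ?case by (simp add: abs_mult)
qed

lemma Pn_iter: assumes g: "g \<in> borel_measurable M"
  shows "Pn p M (\<lambda>y. g ((phi ^^ k) y)) = Pn p M g"
proof -
  have T1: "(phi ^^ k) \<in> M \<rightarrow>\<^sub>M M" and T2: "distr M M (phi ^^ k) = M" using phi_iter[of k] by auto
  have hm: "(\<lambda>t. ennreal (\<bar>g t\<bar> powr p)) \<in> borel_measurable M" using g by simp
  show ?thesis unfolding Pn_def by (rule mp_nn[OF T1 T2 hm])
qed

lemma good_a: "AE y in M. \<forall>j. \<bar>a ((phi ^^ j) y)\<bar> \<le> 1/2"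
  unfolding AE_all_countable
  using mp_AE[OF conjunct1[OF phi_iter] conjunct2[OF phi_iter] a_bound] by blast

lemma existence:
  assumes b: "b \<in> Lp_space p M"
  shows "\<exists>d \<in> Lp_space p M. AE y in M. d y = b y + a y * d (phi y)"
proof -
  have bm: "b \<in> borel_measurable M" using b by (simp add: Lp_space_def)
  define cb where "cb k y = \<bar>b ((phi ^^ k) y)\<bar>" for k y
  define tm where "tm k y = wt k y * b ((phi ^^ k) y)" for k y
  define Q where "Q y = (\<Sum>k. ennreal ((1/2)^(Suc k) * cb k y powr p))" for y
  have cb0: "0 \<le> cb k y" for k y by (simp add: cb_def)
  have tm_meas: "tm k \<in> borel_measurable M" for k
    unfolding tm_def using wt_meas iter_meas[OF bm] by (intro borel_measurable_times) auto
  have Pn_iter: "Pn p M (\<lambda>y. b ((phi ^^ k) y)) = Pn p M b" for k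
    by (rule Pn_iter[OF bm])
  have geo: "(\<Sum>k. ennreal ((1/2::real)^(Suc k))) = 1"
  proof -
    have "(\<Sum>k. ennreal ((1/2::real)^(Suc k))) = ennreal (\<Sum>k. (1/2::real)^(Suc k))"
      by (rule suminf_ennreal2) (auto intro: sums_summable[OF power_half_series])
    also have "\<dots> = 1" using power_half_series by (simp add: sums_iff)
    finally show ?thesis .
  qed
  have bk[measurable]: "(\<lambda>y. b ((phi ^^ k) y)) \<in> borel_measurable M" for k
    by (rule iter_meas[OF bm])
  have intQ: "(\<integral>\<^sup>+y. Q y \<partial>M) = Pn p M b"
  proof -
    have Qeq: "Q y = (\<Sum>k. ennreal ((1/2)^(Suc k)) * ennreal (cb k y powr p))" for y
      unfolding Q_def by (intro suminf_cong ennreal_mult) (auto simp: cb0)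
    have "(\<integral>\<^sup>+y. Q y \<partial>M) = (\<Sum>k. \<integral>\<^sup>+y. ennreal ((1/2)^(Suc k)) * ennreal (cb k y powr p) \<partial>M)"
      unfolding Qeq
      by (rule nn_integral_suminf) (unfold cb_def, measurable)
    also have "\<dots> = (\<Sum>k. ennreal ((1/2)^(Suc k)) * Pn p M b)"
      by (subst nn_integral_cmult) (auto simp: cb_def Pn_iter[unfolded Pn_def] Pn_def intro!: iter_meas bm)
    also have "\<dots> = Pn p M b" using geo by simp
    finally show ?thesis .
  qed
  have Qm: "Q \<in> borel_measurable M"
    unfolding Q_def cb_def by measurable
  have AEQ: "AE y in M. Q y \<noteq> \<infinity>"
    using nn_integral_noteq_infinite[OF Qm] intQ b by (simp add: Lp_space_iff less_top)
  define G where "G y \<longleftrightarrow> (\<forall>j. \<bar>a ((phi ^^ j) y)\<bar> \<le> 1/2) \<and> Q y \<noteq> \<infinity>" for y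
  have AEG: "AE y in M. G y" using AEQ good_a unfolding G_def by auto
  have sP: "summable (\<lambda>k. (1/2)^(Suc k) * cb k y powr p)" if "G y" for y
    by (rule summable_suminf_not_top) (use that in \<open>auto simp: G_def Q_def cb0\<close>)
  have s1: "summable (\<lambda>k. (1/2)^k * cb k y)" if "G y" for y
  proof (rule summable_comparison_test[OF _ summable_add[OF summable_geometric[of "1/2::real"] summable_mult[OF sP[OF that], of 2]]])
    show "\<exists>N. \<forall>n\<ge>N. norm ((1/2)^n * cb n y) \<le> (1/2)^n + 2 * ((1/2)^(Suc n) * cb n y powr p)"
    proof (intro exI allI impI)
      fix n :: nat
      have "cb n y \<le> 1 + cb n y powr p" by (rule le_one_plus_powr[OF cb0 p1])
      then have "(1/2)^n * cb n y \<le> (1/2)^n * (1 + cb n y powr p)" by (intro mult_left_mono) auto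
      then show "norm ((1/2)^n * cb n y) \<le> (1/2)^n + 2 * ((1/2)^(Suc n) * cb n y powr p)"
        using cb0 by (simp add: algebra_simps)
    qed
  qed simp
  have abs_tm: "\<bar>tm k y\<bar> \<le> (1/2)^k * cb k y" if "G y" for k y
    using wt_bound[of y k] that unfolding G_def tm_def cb_def
    by (simp add: abs_mult mult_right_mono)
  have stm: "summable (\<lambda>k. \<bar>tm k y\<bar>)" if "G y" for y
    by (rule summable_comparison_test[OF _ s1[OF that]]) (use abs_tm[OF that] in auto)
  define d where "d y = (\<Sum>k. tm k y)" for y
  have dm: "d \<in> borel_measurable M"
    unfolding d_def by (rule borel_measurable_suminf) (rule tm_meas)
  have tm_Suc: "tm (Suc k) y = a y * tm k (phi y)" for k y
    unfolding tm_def wt.simps funpow_Suc_right comp_def by (simp only: mult.assoc)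
  have AEG': "AE y in M. G (phi y)" by (rule mp_AE[OF phi_meas phi_distr AEG])
  have feqH: "d y = b y + a y * d (phi y)" if Gy: "G (phi y)" for y
  proof -
    have "summable (\<lambda>k. tm k (phi y))" by (rule summable_rabs_cancel[OF stm[OF Gy]])
    then have "(\<lambda>k. tm k (phi y)) sums d (phi y)" unfolding d_def by (rule summable_sums)
    then have "(\<lambda>k. a y * tm k (phi y)) sums (a y * d (phi y))" by (rule sums_mult)
    then have "(\<lambda>k. tm (Suc k) y) sums (a y * d (phi y))" unfolding tm_Suc .
    then have "(\<lambda>k. tm k y) sums (a y * d (phi y) + tm 0 y)"
      using sums_Suc_iff[of "\<lambda>k. tm k y" "a y * d (phi y)"] by blast
    then have "d y = a y * d (phi y) + tm 0 y" unfolding d_def by (rule sums_unique[symmetric])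
    then show "d y = b y + a y * d (phi y)" by (simp add: tm_def)
  qed
  have feq: "AE y in M. d y = b y + a y * d (phi y)"
    by (rule eventually_mono[OF AEG']) (rule feqH)
  have dbound: "AE y in M. ennreal (\<bar>d y\<bar> powr p) \<le> ennreal (2 powr p) * Q y"
  proof (rule AE_mp[OF AEG AE_I2], intro impI)
    fix y assume Gy: "G y"
    have "\<bar>d y\<bar> \<le> (\<Sum>k. \<bar>tm k y\<bar>)"
      unfolding d_def using summable_norm[of "\<lambda>k. tm k y"] stm[OF Gy] by simp
    also have "\<dots> \<le> (\<Sum>k. (1/2)^k * cb k y)"
      by (rule suminf_le[OF abs_tm[OF Gy] stm[OF Gy] s1[OF Gy]])
    also have "\<dots> = 2 * (\<Sum>k. (1/2)^(Suc k) * cb k y)"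
    proof -
      have "(\<lambda>k. (1/2)^(Suc k) * cb k y) = (\<lambda>k. (1/2) * ((1/2)^k * cb k y))" by (simp add: mult.assoc)
      then have "(\<Sum>k. (1/2)^(Suc k) * cb k y) = (1/2) * (\<Sum>k. (1/2)^k * cb k y)"
        using suminf_mult[OF s1[OF Gy], of "1/2"] by simp
      then show ?thesis by simp
    qed
    finally have dle: "\<bar>d y\<bar> \<le> 2 * (\<Sum>k. (1/2)^(Suc k) * cb k y)" .
    have s1': "summable (\<lambda>k. (1/2)^(Suc k) * cb k y)"
      using summable_mult[OF s1[OF Gy], of "1/2"] by (simp add: mult.assoc)
    have S0: "0 \<le> (\<Sum>k. (1/2)^(Suc k) * cb k y)" by (intro suminf_nonneg s1') (simp add: cb0)
    have "\<bar>d y\<bar> powr p \<le> (2 * (\<Sum>k. (1/2)^(Suc k) * cb k y)) powr p"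
      using dle p1 by (intro powr_mono2) auto
    also have "\<dots> = 2 powr p * (\<Sum>k. (1/2)^(Suc k) * cb k y) powr p"
      using S0 by (simp add: powr_mult)
    also have "\<dots> \<le> 2 powr p * (\<Sum>k. (1/2)^(Suc k) * cb k y powr p)"
      by (intro mult_left_mono jensen_inf[OF p1 cb0 s1' sP[OF Gy]]) auto
    finally have "\<bar>d y\<bar> powr p \<le> 2 powr p * (\<Sum>k. (1/2)^(Suc k) * cb k y powr p)" .
    moreover have "Q y = ennreal (\<Sum>k. (1/2)^(Suc k) * cb k y powr p)"
      unfolding Q_def by (rule suminf_ennreal2) (use sP[OF Gy] cb0 in auto)
    moreover have T0: "0 \<le> (\<Sum>k. (1/2)^(Suc k) * cb k y powr p)"
      by (intro suminf_nonneg sP[OF Gy]) (simp add: cb0)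
    ultimately show "ennreal (\<bar>d y\<bar> powr p) \<le> ennreal (2 powr p) * Q y"
      by (simp add: ennreal_mult[symmetric] ennreal_leI del: ennreal_mult_le_mult_iff)
  qed
  have "Pn p M d \<le> (\<integral>\<^sup>+y. ennreal (2 powr p) * Q y \<partial>M)"
    unfolding Pn_def by (rule nn_integral_mono_AE[OF dbound])
  also have "\<dots> = ennreal (2 powr p) * Pn p M b"
    using Qm intQ by (simp add: nn_integral_cmult)
  also have "\<dots> < \<infinity>" using b by (simp add: Lp_space_iff ennreal_mult_less_top)
  finally have "d \<in> Lp_space p M" using dm by (simp add: Lp_space_iff)
  then show ?thesis using feq by blast
qed

end


lemma null_squeeze:
  fixes u v :: "nat \<Rightarrow> real"
  assumes "\<And>n. 0 \<le> u n" "\<And>n. u n \<le> 2 * v n" "v \<longlonglongrightarrow> 0"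
  shows "u \<longlonglongrightarrow> 0"
proof (rule Lim_null_comparison[of _ "\<lambda>n. 2 * v n"])
  show "\<forall>\<^sub>F n in sequentially. norm (u n) \<le> 2 * v n" using assms by simp
  show "(\<lambda>n. 2 * v n) \<longlonglongrightarrow> 0" using tendsto_mult_right_zero[OF assms(3), of 2] by simp
qed

context frs begin

lemma Bop_lin: "Bop (\<lambda>t. f t - (\<Sum>m<(n::nat). c m * D m t)) y = Bop f y - (\<Sum>m<n. c m * Bop (D m) y)"
  unfolding Bop_def by (simp add: sum_subtractf[symmetric] sum_distrib_left algebra_simps sum_negf)

lemma transfer:
  assumes f: "f \<in> Lp_space p M" and D: "\<And>m. D m \<in> Lp_space p M" and b: "\<And>m. b m \<in> Lp_space p M"
    and DB: "AE y in M. \<forall>m. Bop (D m) y = b m y"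
  shows "(\<lambda>n. Lp_norm p M (\<lambda>t. f t - (\<Sum>m<n. c m * D m t))) \<longlonglongrightarrow> 0 \<longleftrightarrow>
         (\<lambda>n. Lp_norm p M (\<lambda>t. Bop f t - (\<Sum>m<n. c m * b m t))) \<longlonglongrightarrow> 0"
proof -
  define h where "h n = (\<lambda>t. f t - (\<Sum>m<n. c m * D m t))" for n
  have hL: "h n \<in> Lp_space p M" for n unfolding h_def by (rule Lp_diff[OF p1 f Lp_sum[OF p1 D]])
  have BhL: "Bop (h n) \<in> Lp_space p M" for n by (rule Bop_Lp[OF hL])
  have rL: "(\<lambda>t. Bop f t - (\<Sum>m<n. c m * b m t)) \<in> Lp_space p M" for n
    by (rule Lp_diff[OF p1 Bop_Lp[OF f] Lp_sum[OF p1 b]])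
  have eq: "Lp_norm p M (Bop (h n)) = Lp_norm p M (\<lambda>t. Bop f t - (\<Sum>m<n. c m * b m t))" for n
  proof (rule Lp_norm_AE_cong)
    show "AE t in M. Bop (h n) t = Bop f t - (\<Sum>m<n. c m * b m t)"
      by (rule eventually_mono[OF DB]) (simp add: h_def Bop_lin)
  qed (use BhL rL in \<open>auto simp: Lp_space_def\<close>)
  show ?thesis
  proof
    assume "(\<lambda>n. Lp_norm p M (\<lambda>t. f t - (\<Sum>m<n. c m * D m t))) \<longlonglongrightarrow> 0"
    then have "(\<lambda>n. Lp_norm p M (h n)) \<longlonglongrightarrow> 0" by (simp add: h_def)
    then have "(\<lambda>n. Lp_norm p M (Bop (h n))) \<longlonglongrightarrow> 0"
      by (intro null_squeeze[OF Lp_norm_nonneg Bop_upper[OF hL]])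
    then show "(\<lambda>n. Lp_norm p M (\<lambda>t. Bop f t - (\<Sum>m<n. c m * b m t))) \<longlonglongrightarrow> 0" by (simp add: eq)
  next
    assume "(\<lambda>n. Lp_norm p M (\<lambda>t. Bop f t - (\<Sum>m<n. c m * b m t))) \<longlonglongrightarrow> 0"
    then have "(\<lambda>n. Lp_norm p M (Bop (h n))) \<longlonglongrightarrow> 0" by (simp add: eq)
    then have "(\<lambda>n. Lp_norm p M (h n)) \<longlonglongrightarrow> 0"
      by (intro null_squeeze[OF Lp_norm_nonneg Bop_lower[OF hL]])
    then show "(\<lambda>n. Lp_norm p M (\<lambda>t. f t - (\<Sum>m<n. c m * D m t))) \<longlonglongrightarrow> 0" by (simp add: h_def)
  qed
qed

end

theorem proposition6p5:
  fixes p :: real and N :: nat and x :: "nat \<Rightarrow> real"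
    and \<alpha> :: "nat \<Rightarrow> real \<Rightarrow> real" and b :: "nat \<Rightarrow> real \<Rightarrow> real"
  assumes "1 \<le> p" and "2 \<le> N"
    and "\<forall>i<N. x i < x (Suc i)"
    and "\<forall>n\<in>{1..N}. \<alpha> n \<in> borel_measurable (lebesgue_on {x 0..x N})"
    and "\<forall>n\<in>{1..N}. esssup (lebesgue_on {x 0..x N}) (\<lambda>t. ereal \<bar>\<alpha> n t\<bar>) < ereal (1/2)"
    and "schauder_basis p (lebesgue_on {x 0..x N}) b"
  shows "schauder_basis p (lebesgue_on {x 0..x N})
           (\<lambda>m t. b m t - frac_op p x N \<alpha> (\<lambda>_. 0) (b m) t)
       \<and> ((\<forall>n\<in>{1..N}. \<exists>c::real. AE t in lebesgue_on {x 0..x N}. \<alpha> n t = c)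
           \<and> bounded_seq p (lebesgue_on {x 0..x N}) b
          \<longrightarrow> bounded_seq p (lebesgue_on {x 0..x N})
                (\<lambda>m t. b m t - frac_op p x N \<alpha> (\<lambda>_. 0) (b m) t))"
proof -
  have \<alpha>b: "\<forall>n\<in>{1..N}. AE t in lebesgue_on {x 0..x N}. \<bar>\<alpha> n t\<bar> \<le> 1/2"
  proof
    fix n assume n: "n \<in> {1..N}"
    have lt: "esssup (lebesgue_on {x 0..x N}) (\<lambda>t. ereal \<bar>\<alpha> n t\<bar>) < ereal (1/2)" using assms(5) n by blast
    show "AE t in lebesgue_on {x 0..x N}. \<bar>\<alpha> n t\<bar> \<le> 1/2"
    proof (rule eventually_mono[OF esssup_AE])
      fix t assume "ereal \<bar>\<alpha> n t\<bar> \<le> esssup (lebesgue_on {x 0..x N}) (\<lambda>t. ereal \<bar>\<alpha> n t\<bar>)"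
      then have "ereal \<bar>\<alpha> n t\<bar> < ereal (1/2)" using lt by (rule le_less_trans)
      then show "\<bar>\<alpha> n t\<bar> \<le> 1/2" by simp
    qed
  qed
  interpret F: frs p N x \<alpha>
    by unfold_locales (use assms \<alpha>b in auto)
  let ?M = "lebesgue_on {x 0..x N}"
  have bL: "\<And>m. b m \<in> Lp_space p ?M" and bU: "\<forall>f \<in> Lp_space p ?M. \<exists>!c :: nat \<Rightarrow> real.
        (\<lambda>n. Lp_norm p ?M (\<lambda>t. f t - (\<Sum>m<n. c m * b m t))) \<longlonglongrightarrow> 0"
    using assms(6) unfolding schauder_basis_def by auto
  define g where "g m = frac_op p x N \<alpha> (\<lambda>_. 0) (b m)" for m
  have g: "g m \<in> Lp_space p ?M \<and> (AE y in ?M. g m y = Top x N \<alpha> (\<lambda>_. 0) (b m) (g m) y)" for m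
  proof -
    obtain d where dL: "d \<in> Lp_space p ?M" and dE: "AE y in ?M. d y = b m y + F.a y * d (F.phi y)"
      using F.existence[OF bL[of m]] by blast
    define w where "w y = b m y - d y" for y
    have wL: "w \<in> Lp_space p ?M" unfolding w_def[abs_def] by (rule Lp_diff[OF assms(1) bL dL])
    have "AE y in ?M. w y = Top x N \<alpha> (\<lambda>_. 0) (b m) w y"
      by (rule eventually_mono[OF dE]) (simp add: F.Top_eq w_def algebra_simps)
    then have ex: "\<exists>w. w \<in> Lp_space p ?M \<and> (AE y in ?M. w y = Top x N \<alpha> (\<lambda>_. 0) (b m) w y)"
      using wL by blast
    show ?thesis unfolding g_def frac_op_def by (rule someI_ex[OF ex])
  qed
  define D where "D m t = b m t - g m t" for m t
  have DL: "D m \<in> Lp_space p ?M" for m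
    unfolding D_def[abs_def] using Lp_diff[OF assms(1) bL g[THEN conjunct1]] by simp
  have DB: "AE y in ?M. \<forall>m. F.Bop (D m) y = b m y"
    unfolding AE_all_countable
  proof
    fix m
    have gE: "AE y in ?M. g m y = Top x N \<alpha> (\<lambda>_. 0) (b m) (g m) y" using g by blast
    show "AE y in ?M. F.Bop (D m) y = b m y"
    proof (rule eventually_mono[OF gE])
      fix y assume "g m y = Top x N \<alpha> (\<lambda>_. 0) (b m) (g m) y"
      then have "g m y = F.a y * (g m (F.phi y) - b m (F.phi y))" by (simp add: F.Top_eq)
      then show "F.Bop (D m) y = b m y" unfolding F.Bop_def D_def by (simp add: algebra_simps)
    qed
  qed
  have SB: "schauder_basis p ?M D"
    unfolding schauder_basis_def
  proof (intro conjI allI ballI)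
    show "D m \<in> Lp_space p ?M" for m by (rule DL)
    fix f assume f: "f \<in> Lp_space p ?M"
    have "\<exists>!c :: nat \<Rightarrow> real. (\<lambda>n. Lp_norm p ?M (\<lambda>t. F.Bop f t - (\<Sum>m<n. c m * b m t))) \<longlonglongrightarrow> 0"
      using bU F.Bop_Lp[OF f] by blast
    then show "\<exists>!c :: nat \<Rightarrow> real. (\<lambda>n. Lp_norm p ?M (\<lambda>t. f t - (\<Sum>m<n. c m * D m t))) \<longlonglongrightarrow> 0"
      using F.transfer[OF f DL bL DB] by simp
  qed
  have BD: "Lp_norm p ?M (F.Bop (D m)) = Lp_norm p ?M (b m)" for m
  proof (rule Lp_norm_AE_cong)
    show "AE t in ?M. F.Bop (D m) t = b m t" by (rule eventually_mono[OF DB]) simp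
  qed (use F.Bop_Lp[OF DL] bL in \<open>auto simp: Lp_space_def\<close>)
  have up: "Lp_norm p ?M (D m) \<le> 2 * Lp_norm p ?M (b m)" for m
    using F.Bop_lower[OF DL, of m] BD[of m] by simp
  have lo: "Lp_norm p ?M (b m) \<le> 2 * Lp_norm p ?M (D m)" for m
    using F.Bop_upper[OF DL, of m] BD[of m] by simp
  have BS: "bounded_seq p ?M D" if bs: "bounded_seq p ?M b"
  proof -
    obtain k K where kK: "0 < k" "k \<le> K" "\<And>m. k \<le> Lp_norm p ?M (b m) \<and> Lp_norm p ?M (b m) \<le> K"
      using bs unfolding bounded_seq_def by blast
    show ?thesis unfolding bounded_seq_def
    proof (rule exI[of _ "k/2"], rule exI[of _ "2 * K"], intro conjI allI)
      show "0 < k / 2" using kK by simp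
      show "k / 2 \<le> 2 * K" using kK by simp
      fix m
      show "k / 2 \<le> Lp_norm p ?M (D m)" using kK(3)[of m] lo[of m] by simp
      show "Lp_norm p ?M (D m) \<le> 2 * K" using kK(3)[of m] up[of m] by simp
    qed
  qed
  have Deq: "D = (\<lambda>m t. b m t - frac_op p x N \<alpha> (\<lambda>_. 0) (b m) t)"
    by (simp add: D_def[abs_def] g_def)
  show ?thesis using SB BS unfolding Deq by blast
qed

end
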